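(* There exist a polynomial $p$ and a constant $c>0$ such that for every integer $k\geq 1$ there exist an approval election $E=(N,C,(A_v)_{v\in N},k)$ with $|N|\le p(k)$ voters, a committee $W_0\subseteq C$ with $|W_0|=k$, and a valid sequence of swaps $(a_1,b_1),\dots,(a_s,b_s)$ starting from $W_0$ with $s\ge c\,k^{\log k}$ (i.e., of length $\Omega(k^{\log k})$) such that every swap in the sequence strictly increases the PAV score, i.e., $\Delta(W_{t-1},a_t,b_t)>0$ for all $t\in[s]$.
   Context: An approval election is a tuple $E=(N,C,(A_v)_{v\in N},k)$ where $N=[n]$ is a set of voters, $C$ is a finite set of candidates, $A_v\subseteq C$ is the approval ballot of voter $v$, and $k\in[|C|]$ is the target committee size. A committee is a subset of $C$. The PAV score of a committee $W$ is $\textsc{pavsc}(W)=\sum_{v\in N}\sum_{j=1}^{|A_v\cap W|}\frac{1}{j}$. For $a\in W$, $b\notin W$, let $\Delta(W,a,b)=\textsc{pavsc}((W\setminus\{a\})\cup\{b\})-\textsc{pavsc}(W)$. A sequence of swaps $(a_1,b_1),\dots,(a_s,b_s)$ is valid starting from $W_0$ if, setting $W_t=(W_{t-1}\cup\{b_t\})\setminus\{a_t\}$, we have $a_t\in W_{t-1}$ and $b_t\notin W_{t-1}$ for every $t\in[s]$. Here $\log$ denotes the base-2 logarithm. *)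

theory Defs
  imports Complex_Main "HOL-Computational_Algebra.Polynomial"
begin

definition is_election :: "nat \<Rightarrow> nat set \<Rightarrow> (nat \<Rightarrow> nat set) \<Rightarrow> nat \<Rightarrow> bool" where
  "is_election n C A k \<longleftrightarrow> finite C \<and> (\<forall>v\<in>{1..n}. A v \<subseteq> C) \<and> 1 \<le> k \<and> k \<le> card C"

definition pavsc :: "nat \<Rightarrow> (nat \<Rightarrow> nat set) \<Rightarrow> nat set \<Rightarrow> real" where
  "pavsc n A W = (\<Sum>v\<in>{1..n}. \<Sum>j=1..card (A v \<inter> W). 1 / real j)"

definition swap :: "nat set \<Rightarrow> nat \<Rightarrow> nat \<Rightarrow> nat set" where
  "swap W a b = (W \<union> {b}) - {a}"

definition pav_delta :: "nat \<Rightarrow> (nat \<Rightarrow> nat set) \<Rightarrow> nat set \<Rightarrow> nat \<Rightarrow> nat \<Rightarrow> real" where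
  "pav_delta n A W a b = pavsc n A (swap W a b) - pavsc n A W"

fun valid_swaps :: "nat set \<Rightarrow> nat set \<Rightarrow> (nat \<times> nat) list \<Rightarrow> bool" where
  "valid_swaps C W [] = True"
| "valid_swaps C W ((a, b) # rest) =
     (a \<in> W \<and> b \<in> C \<and> b \<notin> W \<and> valid_swaps C (swap W a b) rest)"

fun improving_swaps :: "nat \<Rightarrow> (nat \<Rightarrow> nat set) \<Rightarrow> nat set \<Rightarrow> (nat \<times> nat) list \<Rightarrow> bool" where
  "improving_swaps n A W [] = True"
| "improving_swaps n A W ((a, b) # rest) =
     (pav_delta n A W a b > 0 \<and> improving_swaps n A (swap W a b) rest)"

end

theory Submission
  imports Defs "HOL-Library.Log_Nat"
begin


definition uval :: "(nat \<times> (nat \<Rightarrow> bool)) list \<Rightarrow> nat \<Rightarrow> real" where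
  "uval vs s = sum_list (map (\<lambda>(y,P). if P s then 1 / real y else 0) vs)"

lemma harm_step: "1 \<le> (y::nat) \<Longrightarrow> (\<Sum>j=1..y. 1 / real j) = (\<Sum>j=1..y-1. 1 / real j) + 1 / real y"
  by (cases y) (auto simp: sum.cl_ivl_Suc)

lemma sum_nth_shift: "(\<Sum>v\<in>{1..length xs}. g (xs ! (v - 1))) = sum_list (map g xs)"
proof -
  have "(\<Sum>v\<in>{1..length xs}. g (xs ! (v - 1))) = (\<Sum>i<length xs. g (xs ! i))"
    using sum.atLeast1_atMost_eq[of "\<lambda>v. g (xs ! (v - 1))" "length xs"] by simp
  also have "\<dots> = sum_list (map g xs)"
    by (simp add: sum_list_sum_nth atLeast0LessThan)
  finally show ?thesis .
qed

lemma single_slot: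
  fixes vs :: "(nat \<times> (nat \<Rightarrow> bool)) list" and k S :: nat
  assumes k: "k \<ge> 1" and ys: "\<forall>p\<in>set vs. 1 \<le> fst p \<and> fst p \<le> k" and S: "S \<ge> 1"
    and inc: "\<And>s. s + 1 < S \<Longrightarrow> uval vs s < uval vs (s + 1)"
  shows "\<exists>C A W0 sw. is_election (length vs) C A k \<and> W0 \<subseteq> C \<and> card W0 = k \<and>
         valid_swaps C W0 sw \<and> improving_swaps (length vs) A W0 sw \<and> length sw = S - 1"
proof -
  define n where "n = length vs"
  define C where "C = {0..<k-1+S}"
  define A where "A = (\<lambda>v. {0..<fst (vs!(v-1)) - 1} \<union> {k-1+s | s. s < S \<and> snd (vs!(v-1)) s})"
  define Wt where "Wt = (\<lambda>t. {0..<k-1} \<union> {k-1+t})"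
  define K0 where "K0 = (\<Sum>v\<in>{1..n}. \<Sum>j=1..fst (vs!(v-1)) - 1. 1 / real j)"
  have yv: "1 \<le> fst (vs!(v-1)) \<and> fst (vs!(v-1)) \<le> k" if "v \<in> {1..n}" for v
    using ys that unfolding n_def by (auto simp: nth_mem)
  have inter: "A v \<inter> Wt t = {0..<fst (vs!(v-1)) - 1} \<union> (if snd (vs!(v-1)) t then {k-1+t} else {})"
    if "v \<in> {1..n}" "t < S" for v t
    using yv[OF that(1)] that(2) k unfolding A_def Wt_def
    apply auto
    apply (subgoal_tac "s = t")
    apply auto
    done
  have cardi: "card (A v \<inter> Wt t) = fst (vs!(v-1)) - 1 + (if snd (vs!(v-1)) t then 1 else 0)"
    if "v \<in> {1..n}" "t < S" for v t
    using yv[OF that(1)] unfolding inter[OF that] by auto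
  have inner: "(\<Sum>j=1..card (A v \<inter> Wt t). 1 / real j) = (\<Sum>j=1..fst (vs!(v-1)) - 1. 1 / real j)
      + (\<lambda>(y,P). if P t then 1 / real y else 0) (vs!(v-1))"
    if "v \<in> {1..n}" "t < S" for v t
  proof -
    have "1 \<le> fst (vs!(v-1))" using yv[OF that(1)] by simp
    then show ?thesis unfolding cardi[OF that]
      using harm_step[of "fst (vs!(v-1))"] by (cases "vs!(v-1)") auto
  qed
  have pav: "pavsc n A (Wt t) = K0 + uval vs t" if "t < S" for t
  proof -
    have "pavsc n A (Wt t) = (\<Sum>v\<in>{1..n}. (\<Sum>j=1..fst (vs!(v-1)) - 1. 1 / real j)
      + (\<lambda>(y,P). if P t then 1 / real y else 0) (vs!(v-1)))"
      unfolding pavsc_def using inner[OF _ that] by (intro sum.cong) auto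
    also have "\<dots> = K0 + uval vs t"
      unfolding sum.distrib K0_def uval_def n_def
      using sum_nth_shift[of "\<lambda>(y,P). if P t then 1 / real y else 0" vs] by simp
    finally show ?thesis .
  qed
  define sw where "sw = map (\<lambda>t. (k-1+t, k+t)) [0..<S-1]"
  have swp: "swap (Wt t) (k-1+t) (k+t) = Wt (t+1)" for t
    unfolding swap_def Wt_def using k by auto
  have valid: "valid_swaps C (Wt t) (map (\<lambda>t. (k-1+t, k+t)) [t..<S-1])" for t
  proof (induction "S - 1 - t" arbitrary: t)
    case 0 then show ?case by simp
  next
    case (Suc m)
    then have ts: "t < S - 1" by simp
    have up: "[t..<S-1] = t # [Suc t..<S-1]" using ts by (simp add: upt_rec)
    have "valid_swaps C (Wt (t+1)) (map (\<lambda>t. (k-1+t, k+t)) [Suc t..<S-1])"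
      using Suc(1)[of "Suc t"] Suc(2) by simp
    then show ?case unfolding up using ts k
      by (simp only: list.map valid_swaps.simps swp) (auto simp: C_def Wt_def)
  qed
  have impr: "improving_swaps n A (Wt t) (map (\<lambda>t. (k-1+t, k+t)) [t..<S-1])" for t
  proof (induction "S - 1 - t" arbitrary: t)
    case 0 then show ?case by simp
  next
    case (Suc m)
    then have ts: "t < S - 1" by simp
    have up: "[t..<S-1] = t # [Suc t..<S-1]" using ts by (simp add: upt_rec)
    have "improving_swaps n A (Wt (t+1)) (map (\<lambda>t. (k-1+t, k+t)) [Suc t..<S-1])"
      using Suc(1)[of "Suc t"] Suc(2) by simp
    moreover have "pav_delta n A (Wt t) (k-1+t) (k+t) > 0"
      unfolding pav_delta_def swp using pav[of t] pav[of "t+1"] inc[of t] ts by simp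
    ultimately show ?case unfolding up using swp[of t] by simp
  qed
  have el: "is_election n C A k"
    unfolding is_election_def C_def
  proof (intro conjI)
    show "\<forall>v\<in>{1..n}. A v \<subseteq> {0..<k - 1 + S}"
      using yv unfolding A_def by fastforce
  qed (use k S in auto)
  have cW: "card (Wt 0) = k" unfolding Wt_def using k by auto
  have WC: "Wt 0 \<subseteq> C" unfolding Wt_def C_def using S by auto
  show ?thesis
    using el cW WC valid[of 0] impr[of 0] unfolding n_def
    by (intro exI[of _ C] exI[of _ A] exI[of _ "Wt 0"] exI[of _ sw]) (auto simp: sw_def)
qed



fun pn :: "nat \<Rightarrow> nat \<Rightarrow> nat list \<times> nat list" where
  "pn 0 x = ([x], [])"
| "pn (Suc d) x = (fst (pn d x) @ snd (pn d (Suc x)), snd (pn d x) @ fst (pn d (Suc x)))"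

definition lval :: "nat list \<Rightarrow> real" where
  "lval l = sum_list (map (\<lambda>y. 1 / real y) l)"

definition Dd :: "nat \<Rightarrow> nat \<Rightarrow> real" where
  "Dd d x = lval (fst (pn d x)) - lval (snd (pn d x))"

lemma Dd_closed: "x \<ge> 1 \<Longrightarrow> Dd d x = fact d / pochhammer (real x) (Suc d)"
proof (induction d arbitrary: x)
  case 0 then show ?case by (simp add: Dd_def lval_def)
next
  case (Suc d)
  have e: "Dd (Suc d) x = Dd d x - Dd d (Suc x)"
    by (simp add: Dd_def lval_def)
  define A where "A = pochhammer (real x) (Suc d)"
  define B where "B = pochhammer (real x + 1) (Suc d)"
  have P1: "pochhammer (real x) (Suc (Suc d)) = real x * B"
    unfolding B_def by (rule pochhammer_rec)
  have P2: "pochhammer (real x) (Suc (Suc d)) = (real x + real (Suc d)) * A"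
    unfolding A_def by (rule pochhammer_rec')
  have Apos: "A > 0" unfolding A_def using Suc.prems by (intro pochhammer_pos) simp
  have Bpos: "B > 0" unfolding B_def using Suc.prems by (intro pochhammer_pos) simp
  have xpos: "real x > 0" using Suc.prems by simp
  have "Dd (Suc d) x = fact d / A - fact d / B"
    unfolding e Suc.IH[OF Suc.prems] A_def B_def using Suc.IH[of "Suc x"] by (simp add: add.commute)
  also have "\<dots> = fact (Suc d) / pochhammer (real x) (Suc (Suc d))"
  proof -
    have BA: "real x * B = (real x + real (Suc d)) * A" using P1 P2 by simp
    have "fact d / A - fact d / B = fact d * (real x + real (Suc d)) / (real x * B) - fact d * real x / (real x * B)"
    proof -
      have "fact d / A = fact d * (real x + real (Suc d)) / ((real x + real (Suc d)) * A)"
        using Apos by (simp del: of_nat_Suc)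
      also have "\<dots> = fact d * (real x + real (Suc d)) / (real x * B)" using BA by simp
      finally have 1: "fact d / A = fact d * (real x + real (Suc d)) / (real x * B)" .
      have 2: "fact d / B = fact d * real x / (real x * B)" using xpos Bpos by simp
      have 3: "fact d * (real x + real (Suc d)) - fact d * real x = fact d * real (Suc d)"
        by (simp add: algebra_simps)
      show ?thesis unfolding 1 2 diff_divide_distrib[symmetric] 3 ..
    qed
    also have "\<dots> = fact d * real (Suc d) / (real x * B)"
      by (simp only: diff_divide_distrib[symmetric] right_diff_distrib[symmetric]) simp
    also have "\<dots> = fact (Suc d) / (real x * B)"
      by (simp add: fact_Suc)
    finally show ?thesis using P1 by simp
  qed
  finally show ?case .
qed

lemma Dd_pos: "x \<ge> 1 \<Longrightarrow> Dd d x > 0"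
  using Dd_closed[of x d] by (simp add: pochhammer_pos)

lemma Dd_ratio: "x \<ge> 1 \<Longrightarrow> Dd (Suc d) x = Dd d x * real (Suc d) / (real x + real (Suc d))"
  using Dd_closed[of x d] Dd_closed[of x "Suc d"] pochhammer_rec'[of "real x" "Suc d"]
  by (simp add: fact_Suc field_simps)

lemma pn_range: "y \<in> set (fst (pn d x)) \<or> y \<in> set (snd (pn d x)) \<Longrightarrow> x \<le> y \<and> y \<le> x + d"
  by (induction d arbitrary: x) (auto, fastforce+)

lemma pn_len: "length (fst (pn d x)) + length (snd (pn d x)) = 2 ^ d"
proof (induction d arbitrary: x)
  case (Suc d)
  show ?case using Suc[of x] Suc[of "Suc x"] by simp
qed simp



definition rep :: "(nat \<Rightarrow> nat) \<Rightarrow> nat \<Rightarrow> nat list \<Rightarrow> (nat \<times> (nat \<Rightarrow> bool)) list" where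
  "rep a m ys = concat (map (\<lambda>y. map (\<lambda>c. (y, \<lambda>s. c < a s)) [0..<m]) ys)"

definition lev :: "nat \<Rightarrow> nat \<Rightarrow> nat \<Rightarrow> nat \<Rightarrow> (nat \<times> (nat \<Rightarrow> bool)) list" where
  "lev R d x i = rep (\<lambda>s. s div R^i mod R) (R-1) (fst (pn d x))
     @ rep (\<lambda>s. R - 1 - s div R^i mod R) (R-1) (snd (pn d x))"

definition voters :: "nat \<Rightarrow> nat \<Rightarrow> nat \<Rightarrow> (nat \<times> (nat \<Rightarrow> bool)) list" where
  "voters R M x = concat (map (\<lambda>i. lev R (M-1-i) x i) [0..<M])"

lemma uval_append: "uval (xs @ ys) s = uval xs s + uval ys s"
  by (simp add: uval_def)

lemma uval_concat: "uval (concat xss) s = sum_list (map (\<lambda>xs. uval xs s) xss)"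
  by (induction xss) (auto simp: uval_append, simp add: uval_def)

lemma count_list: "sum_list (map (\<lambda>c. if c < a then r else 0) [0..<m]) = real (min a m) * (r::real)"
proof (induction m)
  case (Suc m)
  then show ?case
  proof (cases "a \<le> m")
    case False
    then have "a = Suc m \<or> a > Suc m" by auto
    then show ?thesis using Suc False by (auto simp: min_def algebra_simps)
  qed (auto simp: min_def algebra_simps)
qed simp

lemma uval_rep: "uval (rep a m ys) s = real (min (a s) m) * lval ys"
proof (induction ys)
  case Nil then show ?case by (simp add: rep_def uval_def lval_def)
next
  case (Cons y ys)
  have "uval (rep a m (y # ys)) s = uval (map (\<lambda>c. (y, \<lambda>s. c < a s)) [0..<m]) s + uval (rep a m ys) s"
    by (simp add: rep_def uval_append)
  also have "uval (map (\<lambda>c. (y, \<lambda>s. c < a s)) [0..<m]) s = real (min (a s) m) * (1 / real y)"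
    unfolding uval_def using count_list[of "a s" "1 / real y" m] by (simp add: o_def)
  finally show ?case using Cons by (simp add: lval_def algebra_simps)
qed

lemma uval_lev:
  assumes "R \<ge> 1"
  shows "uval (lev R d x i) s = real (s div R^i mod R) * Dd d x + real (R-1) * lval (snd (pn d x))"
proof -
  define g where "g = s div R^i mod R"
  have "g < R" unfolding g_def using assms by simp
  then have g: "g \<le> R - 1" by simp
  have m1: "min g (R-1) = g" using g by simp
  have m2: "min (R - 1 - g) (R-1) = R - 1 - g" by simp
  have r: "real (R - 1 - g) = real (R-1) - real g" using g by simp
  show ?thesis unfolding lev_def uval_append uval_rep g_def[symmetric] m1 m2 r Dd_def
    by (simp add: algebra_simps)
qed

lemma uval_voters:
  assumes "R \<ge> 1"
  shows "uval (voters R M x) s = (\<Sum>i<M. real (s div R^i mod R) * Dd (M-1-i) x)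
     + (\<Sum>i<M. real (R-1) * lval (snd (pn (M-1-i) x)))"
  unfolding voters_def uval_concat map_map o_def uval_lev[OF assms]
  by (simp add: sum_list_sum_nth atLeast0LessThan sum.distrib)

lemma digits_mono:
  fixes E :: "nat \<Rightarrow> real"
  assumes "R \<ge> 1" "\<And>i. i < m \<Longrightarrow> E i > 0" "\<And>i. Suc i < m \<Longrightarrow> real R * E i \<le> E (Suc i)"
    "s < s'" "s' < R^m"
  shows "(\<Sum>i<m. real (s div R^i mod R) * E i) + E 0 \<le> (\<Sum>i<m. real (s' div R^i mod R) * E i)"
  using assms
proof (induction m arbitrary: s s' E)
  case 0 then show ?case by simp
next
  case (Suc m)
  define G where "G = (\<lambda>E' t. \<Sum>i<m. real (t div R^i mod R) * E' i)"
  have split: "(\<Sum>i<Suc m. real (t div R^i mod R) * E i) = real (t mod R) * E 0 + G (E \<circ> Suc) (t div R)" for t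
    unfolding G_def sum.lessThan_Suc_shift by (simp add: div_mult2_eq power_Suc)
  have E0: "E 0 > 0" using Suc.prems(2) by simp
  show ?case
  proof (cases "s div R = s' div R")
    case True
    have d1: "s = s div R * R + s mod R" by simp
    have d2: "s' = s' div R * R + s' mod R" by simp
    have "s div R * R = s' div R * R" using True by simp
    then have "s mod R < s' mod R" using Suc.prems(4) d1 d2 by linarith
    then have "real (s mod R) + 1 \<le> real (s' mod R)" by linarith
    from mult_right_mono[OF this less_imp_le[OF E0]]
    have "real (s mod R) * E 0 + E 0 \<le> real (s' mod R) * E 0" by (simp add: algebra_simps)
    then show ?thesis unfolding split True by simp
  next
    case False
    then have lt: "s div R < s' div R" using Suc.prems(4) div_le_mono
      by (metis le_neq_implies_less less_imp_le)
    have bd: "s' div R < R^m" using Suc.prems(5) Suc.prems(1)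
      by (simp add: div_less_iff_less_mult power_Suc mult.commute)
    have m1: "m \<ge> 1" proof (rule ccontr)
      assume "\<not> m \<ge> 1" then have "m = 0" by simp
      then show False using bd lt by simp
    qed
    have IH: "G (E \<circ> Suc) (s div R) + E 1 \<le> G (E \<circ> Suc) (s' div R)"
      using Suc.IH[of "E \<circ> Suc" "s div R" "s' div R"] Suc.prems(1-3) lt bd unfolding G_def by simp
    have RE: "real R * E 0 \<le> E 1" using Suc.prems(3)[of 0] m1 by simp
    have "s mod R < R" using Suc.prems(1) by simp
    then have sm: "real (s mod R) + 1 \<le> real R" by linarith
    from mult_right_mono[OF sm less_imp_le[OF E0]]
    have "real (s mod R) * E 0 + E 0 \<le> real R * E 0" by (simp add: algebra_simps)
    moreover have "0 \<le> real (s' mod R) * E 0" using E0 by simp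
    ultimately show ?thesis unfolding split using IH RE by linarith
  qed
qed



lemma rep_mem: "p \<in> set (rep a m ys) \<Longrightarrow> fst p \<in> set ys"
  unfolding rep_def by auto

lemma voters_range:
  assumes "p \<in> set (voters R M x)"
  shows "x \<le> fst p \<and> fst p \<le> x + M"
proof -
  obtain i where i: "i < M" "p \<in> set (lev R (M-1-i) x i)"
    using assms unfolding voters_def by auto
  then have "fst p \<in> set (fst (pn (M-1-i) x)) \<or> fst p \<in> set (snd (pn (M-1-i) x))"
    unfolding lev_def using rep_mem by fastforce
  from pn_range[OF this] show ?thesis by arith
qed

lemma length_rep: "length (rep a m ys) = m * length ys"
  unfolding rep_def by (induction ys) auto

lemma length_lev: "length (lev R d x i) = (R - 1) * 2 ^ d"
  unfolding lev_def length_append length_rep add_mult_distrib2[symmetric] pn_len ..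

lemma length_voters: "length (voters R M x) \<le> M * R * 2 ^ M"
proof -
  have "length (voters R M x) = (\<Sum>i<M. (R - 1) * 2 ^ (M-1-i))"
    unfolding voters_def length_concat map_map o_def length_lev
    by (simp add: sum_list_sum_nth atLeast0LessThan)
  also have "\<dots> \<le> (\<Sum>i<M. R * 2 ^ M)"
  proof (intro sum_mono)
    fix i assume "i \<in> {..<M}"
    have "(R - 1) * 2 ^ (M-1-i) \<le> R * 2 ^ (M-1-i)" by simp
    also have "\<dots> \<le> R * 2 ^ M" by (intro mult_le_mono2 power_increasing) auto
    finally show "(R - 1) * 2 ^ (M-1-i) \<le> R * 2 ^ M" .
  qed
  also have "\<dots> = M * R * 2 ^ M" by simp
  finally show ?thesis .
qed

lemma voters_inc:
  assumes R: "R \<ge> 1" and x: "x = R * M" and M: "M \<ge> 1" and s: "s + 1 < R ^ M"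
  shows "uval (voters R M x) s < uval (voters R M x) (s + 1)"
proof -
  define E where "E = (\<lambda>i. Dd (M-1-i) x)"
  have x1: "x \<ge> 1" using R M x by simp
  have Epos: "E i > 0" for i unfolding E_def using Dd_pos[OF x1] by simp
  have Erat: "real R * E i \<le> E (Suc i)" if "Suc i < M" for i
  proof -
    define d where "d = M - 2 - i"
    have e1: "M - 1 - i = Suc d" and e2: "M - 1 - Suc i = d" unfolding d_def using that by auto
    have Ei: "E i = E (Suc i) * real (Suc d) / (real x + real (Suc d))"
      unfolding E_def e1 e2 using Dd_ratio[OF x1] by simp
    have le: "real R * real (Suc d) \<le> real x + real (Suc d)"
    proof -
      have "R * Suc d \<le> R * M" using that unfolding d_def by (intro mult_le_mono2) auto
      then have "R * Suc d \<le> x + Suc d" using x by simp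
      then show ?thesis by (metis of_nat_add of_nat_le_iff of_nat_mult)
    qed
    have "real R * E i = E (Suc i) * (real R * real (Suc d) / (real x + real (Suc d)))"
      unfolding Ei by simp
    moreover have "real R * real (Suc d) / (real x + real (Suc d)) \<le> 1"
      using le by (simp del: of_nat_Suc)
    moreover have "E (Suc i) > 0" by (rule Epos)
    ultimately show ?thesis using mult_left_mono[of "real R * real (Suc d) / (real x + real (Suc d))" 1 "E (Suc i)"]
      by (simp only: mult_1_right)
  qed
  have "(\<Sum>i<M. real (s div R^i mod R) * E i) + E 0 \<le> (\<Sum>i<M. real ((s+1) div R^i mod R) * E i)"
    by (rule digits_mono[OF R]) (use Epos Erat s in auto)
  then show ?thesis unfolding uval_voters[OF R] E_def using Epos[of 0] unfolding E_def by simp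
qed



lemma param_ineq: "q \<ge> 9 \<Longrightarrow> 4 * (q + 2) * (2 ^ (q + 2) + 1) \<le> (2::nat) ^ (2 * q)"
proof (induction q rule: nat_induct_at_least)
  case base then show ?case by simp
next
  case (Suc q)
  have a: "q + 3 \<le> 2 * (q + 2)" by simp
  have b: "2 ^ (q + 3) + 1 \<le> 2 * (2 ^ (q + 2) + (1::nat))" by (simp add: power_add)
  have "4 * (Suc q + 2) * (2 ^ (Suc q + 2) + 1) = 4 * (q + 3) * (2 ^ (q + 3) + (1::nat))"
    by (simp only: add_Suc_shift) simp
  also have "\<dots> \<le> 4 * (2 * (q + 2)) * (2 * (2 ^ (q + 2) + 1))"
    using a b by (intro mult_le_mono mult_le_mono2) auto
  also have "\<dots> = 4 * (4 * (q + 2) * (2 ^ (q + 2) + 1))" by simp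
  also have "\<dots> \<le> 4 * 2 ^ (2 * q)" using Suc.IH by simp
  also have "\<dots> = 2 ^ (2 * Suc q)" by (simp add: power_add)
  finally show ?case .
qed

lemma kpow_bound:
  assumes "(2::nat) ^ L \<le> k" "k < 2 ^ Suc L"
  shows "real k powr log 2 (real k) \<le> 2 ^ ((L+1)^2)"
proof -
  have "(1::nat) \<le> 2 ^ L" by simp
  then have k1: "1 \<le> k" using assms(1) by linarith
  then have k0: "real k > 0" by simp
  from k1 have l0: "log 2 (real k) \<ge> 0" by simp
  have "real k < real (2 ^ Suc L)" using assms(2) by (simp only: of_nat_less_iff)
  also have "real (2 ^ Suc L) = 2 powr real (Suc L)" by (subst powr_realpow) auto
  finally have "real k < 2 powr real (Suc L)" .
  then have l1: "log 2 (real k) \<le> real (L+1)"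
    using k0 by (simp add: log_less_iff less_imp_le)
  have "real k powr log 2 (real k) = 2 powr (log 2 (real k) * log 2 (real k))"
    using k0 by (simp add: powr_powr[symmetric])
  also have "\<dots> \<le> 2 powr (real (L+1) * real (L+1))"
    using l0 l1 by (intro powr_mono mult_mono) auto
  also have "\<dots> = 2 ^ ((L+1)^2)"
  proof -
    have "real (L+1) * real (L+1) = real ((L+1)^2)" by (simp only: power2_eq_square of_nat_mult)
    then show ?thesis by (simp only:) (subst powr_realpow, auto)
  qed
  finally show ?thesis .
qed

theorem theorem3:
  shows "\<exists>(p :: real poly) (c :: real). c > 0 \<and>
    (\<forall>k :: nat. k \<ge> 1 \<longrightarrow>
      (\<exists>n C A W0 sw.
         is_election n C A k \<and> real n \<le> poly p (real k) \<and>
         W0 \<subseteq> C \<and> card W0 = k \<and>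
         valid_swaps C W0 sw \<and> improving_swaps n A W0 sw \<and>
         real (length sw) \<ge> c * real k powr (log 2 (real k))))"
proof -
  define c :: real where "c = 1 / 2 ^ 324"
  have cpos: "c > 0" unfolding c_def by simp
  have "\<forall>k :: nat. k \<ge> 1 \<longrightarrow> (\<exists>n C A W0 sw. is_election n C A k \<and> real n \<le> poly (monom 256 4) (real k) \<and>
         W0 \<subseteq> C \<and> card W0 = k \<and> valid_swaps C W0 sw \<and> improving_swaps n A W0 sw \<and>
         real (length sw) \<ge> c * real k powr (log 2 (real k)))"
  proof (intro allI impI)
  fix k :: nat assume k: "k \<ge> 1"
  define L where "L = floorlog 2 k - 1"
  have fb: "2 ^ (floorlog 2 k - 1) \<le> k \<and> k < 2 ^ floorlog 2 k" using floorlog_bounds[of k 2] k by simp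
  have fl1: "floorlog 2 k \<ge> 1" using k by (simp add: floorlog_def)
  have L1: "2 ^ L \<le> k" and L2: "k < 2 ^ Suc L" using fb fl1 unfolding L_def by auto
  have kp: "real k powr log 2 (real k) \<le> 2 ^ ((L+1)^2)" by (rule kpow_bound[OF L1 L2])
  have kr: "(real k)^4 \<ge> 1" using k by simp
  show "\<exists>n C A W0 sw. is_election n C A k \<and> real n \<le> poly (monom 256 4) (real k) \<and>
         W0 \<subseteq> C \<and> card W0 = k \<and> valid_swaps C W0 sw \<and> improving_swaps n A W0 sw \<and>
         real (length sw) \<ge> c * real k powr (log 2 (real k))"
  proof (cases "L \<ge> 18")
    case False
    define vs :: "(nat \<times> (nat \<Rightarrow> bool)) list" where "vs = [(1, \<lambda>s. s = 1)]"
    have "\<exists>C A W0 sw. is_election (length vs) C A k \<and> W0 \<subseteq> C \<and> card W0 = k \<and>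
         valid_swaps C W0 sw \<and> improving_swaps (length vs) A W0 sw \<and> length sw = 2 - 1"
      by (rule single_slot) (use k in \<open>auto simp: vs_def uval_def\<close>)
    then obtain C A W0 sw where H: "is_election (length vs) C A k" "W0 \<subseteq> C" "card W0 = k"
      "valid_swaps C W0 sw" "improving_swaps (length vs) A W0 sw" "length sw = 1" by auto
    have "(L+1)^2 \<le> 18^2" using False by (intro power_mono) auto
    then have "(2::real) ^ ((L+1)^2) \<le> 2 ^ 324" by (intro power_increasing) auto
    then have "c * real k powr log 2 (real k) \<le> 1"
      using kp unfolding c_def by (simp add: field_simps)
    moreover have "real (length vs) \<le> poly (monom 256 4) (real k)"
      using kr by (simp add: vs_def poly_monom)
    ultimately show ?thesis using H by (intro exI[of _ "length vs"] exI[of _ C] exI[of _ A] exI[of _ W0] exI[of _ sw]) auto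
  next
    case True
    define q where "q = L div 2"
    define h where "h = q + 2"
    define R :: nat where "R = 2 ^ h"
    define M where "M = 4 * h"
    define x where "x = R * M"
    have q9: "q \<ge> 9" using True unfolding q_def by simp
    have Lq: "2 * q \<le> L" "L \<le> 2 * q + 1" unfolding q_def by auto
    have MR: "M * (R + 1) \<le> k"
    proof -
      have "M * (R + 1) = 4 * (q + 2) * (2 ^ (q + 2) + 1)" unfolding M_def R_def h_def by simp
      also have "\<dots> \<le> 2 ^ (2 * q)" by (rule param_ineq[OF q9])
      also have "\<dots> \<le> 2 ^ L" using Lq by (intro power_increasing) auto
      finally show ?thesis using L1 by simp
    qed
    have R1: "R \<ge> 1" unfolding R_def by simp
    have M1: "M \<ge> 1" unfolding M_def h_def by simp
    define vs where "vs = voters R M x"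
    have "\<exists>C A W0 sw. is_election (length vs) C A k \<and> W0 \<subseteq> C \<and> card W0 = k \<and>
         valid_swaps C W0 sw \<and> improving_swaps (length vs) A W0 sw \<and> length sw = R ^ M - 1"
    proof (rule single_slot[OF k])
      show "\<forall>p\<in>set vs. 1 \<le> fst p \<and> fst p \<le> k"
      proof
        fix p assume "p \<in> set vs"
        from voters_range[OF this[unfolded vs_def]]
        have "x \<le> fst p \<and> fst p \<le> x + M" .
        moreover have "x \<ge> 1" unfolding x_def using R1 M1 by simp
        moreover have "x + M \<le> k" using MR unfolding x_def by (simp add: algebra_simps)
        ultimately show "1 \<le> fst p \<and> fst p \<le> k" by simp
      qed
      show "R ^ M \<ge> 1" using R1 by simp
      show "uval vs s < uval vs (s + 1)" if "s + 1 < R ^ M" for s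
        unfolding vs_def by (rule voters_inc[OF R1 x_def M1 that])
    qed
    then obtain C A W0 sw where H: "is_election (length vs) C A k" "W0 \<subseteq> C" "card W0 = k"
      "valid_swaps C W0 sw" "improving_swaps (length vs) A W0 sw" "length sw = R ^ M - 1" by auto
    have nb: "length vs \<le> 256 * k ^ 4"
    proof -
      have "length vs \<le> M * R * 2 ^ M" unfolding vs_def by (rule length_voters)
      also have "\<dots> \<le> k * k * (256 * k ^ 2)"
      proof (intro mult_le_mono)
        have "M \<le> M * (R + 1)" by simp
        then show "M \<le> k" using MR by linarith
        have "1 * (R + 1) \<le> M * (R + 1)" using M1 by (intro mult_le_mono1)
        then have "R \<le> M * (R + 1)" by simp
        then show "R \<le> k" using MR by linarith
        have "(2::nat) ^ M = 256 * 4 ^ (2 * q)" unfolding M_def h_def by (simp add: power_add power_mult)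
        also have "\<dots> \<le> 256 * 4 ^ L" using Lq by (intro mult_le_mono2 power_increasing) auto
        also have "\<dots> = 256 * (2 ^ L) ^ 2" by (simp add: power2_eq_square power_mult_distrib[symmetric])
        also have "\<dots> \<le> 256 * k ^ 2" using L1 by (intro mult_le_mono2 power_mono) auto
        finally show "(2::nat) ^ M \<le> 256 * k ^ 2" .
      qed
      also have "\<dots> = 256 * k ^ 4" by (simp add: power2_eq_square power4_eq_xxxx)
      finally show ?thesis .
    qed
    have len: "2 ^ ((L+1)^2) \<le> R ^ M - 1"
    proof -
      have e: "R ^ M = 2 ^ (h * M)" unfolding R_def by (simp add: power_mult)
      have "(L+1)^2 + 1 \<le> (L+3)^2" by (simp add: power2_eq_square algebra_simps)
      also have "\<dots> \<le> (2*h)^2" using Lq unfolding h_def by (intro power_mono) auto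
      also have "\<dots> \<le> h * M" unfolding M_def by (simp add: power2_eq_square)
      finally have "(2::nat) ^ ((L+1)^2 + 1) \<le> 2 ^ (h * M)" by (intro power_increasing) auto
      then have "2 * 2 ^ ((L+1)^2) \<le> R ^ M" unfolding e by simp
      moreover have "(1::nat) \<le> 2 ^ ((L+1)^2)" by simp
      ultimately show ?thesis by linarith
    qed
    have "c * real k powr log 2 (real k) \<le> 2 ^ ((L+1)^2)"
    proof -
      have "0 \<le> real k powr log 2 (real k)" by simp
      moreover have "c \<le> 1" unfolding c_def by simp
      ultimately have "c * real k powr log 2 (real k) \<le> real k powr log 2 (real k)"
        using mult_right_mono[of c 1] by simp
      then show ?thesis using kp by linarith
    qed
    also have "\<dots> = real (2 ^ ((L+1)^2))" by simp
    also have "\<dots> \<le> real (length sw)" using len H(6) by (simp only: of_nat_le_iff)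
    finally have "c * real k powr log 2 (real k) \<le> real (length sw)" .
    moreover have "real (length vs) \<le> poly (monom 256 4) (real k)"
    proof -
      have "real (length vs) \<le> real (256 * k ^ 4)" using nb by (simp only: of_nat_le_iff)
      then show ?thesis by (simp add: poly_monom)
    qed
    ultimately show ?thesis using H by (intro exI[of _ "length vs"] exI[of _ C] exI[of _ A] exI[of _ W0] exI[of _ sw]) auto
  qed
  qed
  then show ?thesis using cpos by blast
qed


end
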